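(* Let $N$ qudits (each $\mathbb{C}^N$) be in the $N$-singlet $|S^{(N)}_N(\boldsymbol\alpha^{(0)})\rangle$, where $\boldsymbol\alpha^{(0)}=\{|\alpha^{(0)}_i\rangle\}_{i=1}^N$ is an orthonormal basis. For $m=1,\dots,M$ (with $M<N$), party $m$ measures qudit $m$ in an orthonormal basis $B_m=\{|\alpha^{(m)}_i\rangle\}_{i=1}^N$, where $|\alpha^{(m)}_i\rangle=U^{(m)}|\alpha^{(m-1)}_i\rangle$. Here $U^{(1)}$ is an arbitrary unitary on $\mathbb{C}^N$. For $m\ge2$, let $n_1,\dots,n_{m-1}$ be the indices of the outcomes already obtained; then $U^{(m)}$ is an arbitrary unitary that acts as the identity on each $|\alpha^{(m-1)}_{n_k}\rangle$, $k<m$, and maps the span of the remaining $N-m+1$ vectors $\{|\alpha^{(m-1)}_i\rangle\}_{i\notin\{n_1,\dots,n_{m-1}\}}$ into itself. Whatever the outcomes $|\alpha^{(m)}_{n_m}\rangle$, the final state is, up to a global phase, $$|\alpha^{(1)}_{n_1}\rangle_1\cdots|\alpha^{(M)}_{n_M}\rangle_M\otimes|S^{(N-M)}_{N-M}(\boldsymbol\alpha^{(M)};n_1,\dots,n_M)\rangle_{M+1,\dots,N}.$$ That is, the unmeasured parties share an $(N-M)$-singlet written in the basis $B_M$ with the levels $|\alpha^{(M)}_{n_1}\rangle,\dots,|\alpha^{(M)}_{n_M}\rangle$ excluded.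
   Context: For an orthonormal basis $\boldsymbol\alpha=\{|\alpha_i\rangle\}_{i=1}^N$ of $\mathbb{C}^N$, the $N$-singlet is $|S^{(N)}_N(\boldsymbol\alpha)\rangle=\frac{1}{\sqrt{N!}}\sum_{\pi\in S_N}\operatorname{sgn}(\pi)|\alpha_{\pi(1)},\dots,\alpha_{\pi(N)}\rangle$. For a set $\{n_1,\dots,n_M\}$ of distinct indices, $|S^{(N-M)}_{N-M}(\boldsymbol\alpha;n_1,\dots,n_M)\rangle$ denotes the totally antisymmetric normalized state of $N-M$ qudits built from the basis vectors $\{|\alpha_i\rangle\}_{i\notin\{n_1,\dots,n_M\}}$: $\frac{1}{\sqrt{(N-M)!}}\sum_\sigma\operatorname{sgn}(\sigma)|\alpha_{\sigma(1)},\dots,\alpha_{\sigma(N-M)}\rangle$, where $\sigma$ ranges over bijections onto the complementary index set. *)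

theory Defs
  imports Complex_Main "HOL-Combinatorics.Permutations" "HOL-Library.FuncSet"
begin

text \<open>Vectors of C^N: functions nat => complex, components indexed by 0..<N (zero beyond).
  Basis vectors / outcome labels and qudit positions are indexed by 1..N as in the paper.\<close>

definition cinner :: "nat \<Rightarrow> (nat \<Rightarrow> complex) \<Rightarrow> (nat \<Rightarrow> complex) \<Rightarrow> complex" where
  "cinner N v w = (\<Sum>j<N. cnj (v j) * w j)"

definition is_vec :: "nat \<Rightarrow> (nat \<Rightarrow> complex) \<Rightarrow> bool" where
  "is_vec N v \<longleftrightarrow> (\<forall>j\<ge>N. v j = 0)"

definition onb :: "nat \<Rightarrow> (nat \<Rightarrow> nat \<Rightarrow> complex) \<Rightarrow> bool" where
  "onb N a \<longleftrightarrow> (\<forall>i\<in>{1..N}. is_vec N (a i))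
     \<and> (\<forall>i\<in>{1..N}. \<forall>k\<in>{1..N}. cinner N (a i) (a k) = (if i = k then 1 else 0))
     \<and> (\<forall>v. is_vec N v \<longrightarrow> (\<exists>c. v = (\<lambda>j. \<Sum>i\<in>{1..N}. c i * a i j)))"

definition mat_app :: "nat \<Rightarrow> (nat \<Rightarrow> nat \<Rightarrow> complex) \<Rightarrow> (nat \<Rightarrow> complex) \<Rightarrow> nat \<Rightarrow> complex" where
  "mat_app N U v = (\<lambda>j. if j < N then (\<Sum>k<N. U j k * v k) else 0)"

definition is_unitary :: "nat \<Rightarrow> (nat \<Rightarrow> nat \<Rightarrow> complex) \<Rightarrow> bool" where
  "is_unitary N U \<longleftrightarrow> (\<forall>i<N. \<forall>j<N. (\<Sum>k<N. cnj (U k i) * U k j) = (if i = j then 1 else 0))"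

text \<open>States of N qudits: amplitude functions on configurations x, where x k (k in 1..N)
  is the computational-basis level (0..<N) of qudit k.\<close>
definition cfgs :: "nat \<Rightarrow> (nat \<Rightarrow> nat) set" where
  "cfgs N = ({1..N} \<rightarrow>\<^sub>E {..<N})"

definition snorm :: "nat \<Rightarrow> ((nat \<Rightarrow> nat) \<Rightarrow> complex) \<Rightarrow> real" where
  "snorm N \<Psi> = sqrt (\<Sum>x\<in>cfgs N. (cmod (\<Psi> x))\<^sup>2)"

definition singlet :: "nat \<Rightarrow> (nat \<Rightarrow> nat \<Rightarrow> complex) \<Rightarrow> (nat \<Rightarrow> nat) \<Rightarrow> complex" where
  "singlet N a = (\<lambda>x. complex_of_real (1 / sqrt (fact N)) *
     (\<Sum>\<pi>\<in>{\<pi>. \<pi> permutes {1..N}}. of_int (sign \<pi>) * (\<Prod>k\<in>{1..N}. a (\<pi> k) (x k))))"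

text \<open>Sign of a bijection between two finite sets of naturals, both ordered increasingly
  (i.e. the sign of the induced permutation): (-1)^(number of inversions).\<close>
definition bij_sign :: "nat set \<Rightarrow> (nat \<Rightarrow> nat) \<Rightarrow> complex" where
  "bij_sign P \<sigma> = (-1) ^ card {(p, q). p \<in> P \<and> q \<in> P \<and> p < q \<and> \<sigma> q < \<sigma> p}"

text \<open>Totally antisymmetric normalized state on the qudits P built from the basis vectors
  a i, i in I (card P = card I).\<close>
definition sub_singlet :: "nat set \<Rightarrow> nat set \<Rightarrow> (nat \<Rightarrow> nat \<Rightarrow> complex) \<Rightarrow> (nat \<Rightarrow> nat) \<Rightarrow> complex" where
  "sub_singlet P I a = (\<lambda>x. complex_of_real (1 / sqrt (fact (card I))) *
     (\<Sum>\<sigma>\<in>{\<sigma>. \<sigma> \<in> P \<rightarrow>\<^sub>E I \<and> bij_betw \<sigma> P I}. bij_sign P \<sigma> * (\<Prod>k\<in>P. a (\<sigma> k) (x k))))"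

definition qproj :: "nat \<Rightarrow> nat \<Rightarrow> (nat \<Rightarrow> complex) \<Rightarrow> ((nat \<Rightarrow> nat) \<Rightarrow> complex) \<Rightarrow> (nat \<Rightarrow> nat) \<Rightarrow> complex" where
  "qproj N k b \<Psi> = (\<lambda>x. b (x k) * (\<Sum>j<N. cnj (b j) * \<Psi> (x(k := j))))"

text \<open>Unnormalized state after parties 1..m obtained outcomes a 1 (n 1), ..., a m (n m)
  on qudits 1..m (sequential projective measurements).\<close>
fun meas_seq :: "nat \<Rightarrow> (nat \<Rightarrow> nat \<Rightarrow> nat \<Rightarrow> complex) \<Rightarrow> (nat \<Rightarrow> nat) \<Rightarrow> nat
                 \<Rightarrow> ((nat \<Rightarrow> nat) \<Rightarrow> complex) \<Rightarrow> (nat \<Rightarrow> nat) \<Rightarrow> complex" where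
  "meas_seq N a n 0 \<Psi> = \<Psi>"
| "meas_seq N a n (Suc m) \<Psi> = qproj N (Suc m) (a (Suc m) (n (Suc m))) (meas_seq N a n m \<Psi>)"

end

theory Submission
  imports Defs
begin
definition sgp :: "nat \<Rightarrow> nat \<Rightarrow> complex" where "sgp u v = (if v < u then -1 else 1)"
definition QQ :: "nat set \<Rightarrow> (nat \<times> nat) set" where "QQ P = {(p,q). p\<in>P \<and> q\<in>P \<and> p<q}"

lemma finite_QQ: "finite P \<Longrightarrow> finite (QQ P)"
  by (rule finite_subset[of _ "P \<times> P"]) (auto simp: QQ_def)

lemma bij_sign_prod: "finite P \<Longrightarrow> bij_sign P \<sigma> = (\<Prod>pq\<in>QQ P. sgp (\<sigma> (fst pq)) (\<sigma> (snd pq)))"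
proof -
  assume f: "finite P"
  have "(\<Prod>pq\<in>QQ P. sgp (\<sigma> (fst pq)) (\<sigma> (snd pq)))
      = (\<Prod>pq\<in>QQ P. if \<sigma> (snd pq) < \<sigma> (fst pq) then -1 else 1)" by (simp add: sgp_def)
  also have "\<dots> = (-1) ^ card (QQ P \<inter> {pq. \<sigma> (snd pq) < \<sigma> (fst pq)})"
    using f by (simp add: prod.If_cases finite_QQ)
  also have "QQ P \<inter> {pq. \<sigma> (snd pq) < \<sigma> (fst pq)} = {(p, q). p \<in> P \<and> q \<in> P \<and> p < q \<and> \<sigma> q < \<sigma> p}"
    by (auto simp: QQ_def)
  finally show ?thesis by (simp add: bij_sign_def)
qed

lemma sgp_sq: "sgp u v * sgp u v = 1" by (simp add: sgp_def)
lemma sgp_swap: "u \<noteq> v \<Longrightarrow> sgp v u = - sgp u v" by (simp add: sgp_def)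

lemma bij_sign_mult:
  assumes fP: "finite P" and fI: "finite I" and bs: "bij_betw \<sigma> P I" and it: "inj_on \<tau> I"
  shows "bij_sign P (\<tau> \<circ> \<sigma>) = bij_sign P \<sigma> * bij_sign I \<tau>"
proof -
  define h where "h u v = sgp u v * sgp (\<tau> u) (\<tau> v)" for u v
  have hsym: "h u v = h v u" if "u \<in> I" "v \<in> I" "u \<noteq> v" for u v
  proof -
    have "\<tau> u \<noteq> \<tau> v" using it that by (auto dest: inj_onD)
    thus ?thesis using that by (auto simp: h_def sgp_def)
  qed
  have 1: "bij_sign P (\<tau> \<circ> \<sigma>) = (\<Prod>pq\<in>QQ P. sgp (\<sigma> (fst pq)) (\<sigma> (snd pq)) * h (\<sigma> (fst pq)) (\<sigma> (snd pq)))"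
    unfolding bij_sign_prod[OF fP] h_def
    by (rule prod.cong) (auto simp: mult.assoc[symmetric] sgp_sq)
  define g where "g pq = (min (\<sigma> (fst pq)) (\<sigma> (snd pq)), max (\<sigma> (fst pq)) (\<sigma> (snd pq)))" for pq
  have inj: "inj_on \<sigma> P" and im: "\<sigma> ` P = I" using bs by (auto simp: bij_betw_def)
  have gb: "bij_betw g (QQ P) (QQ I)"
  proof (rule bij_betw_imageI)
    show "inj_on g (QQ P)"
    proof (rule inj_onI)
      fix x y assume x: "x \<in> QQ P" and y: "y \<in> QQ P" and e: "g x = g y"
      obtain p q where xx: "x = (p,q)" "p \<in> P" "q \<in> P" "p < q" using x by (auto simp: QQ_def)
      obtain p' q' where yy: "y = (p',q')" "p' \<in> P" "q' \<in> P" "p' < q'" using y by (auto simp: QQ_def)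
      have "\<sigma> p \<noteq> \<sigma> q" "\<sigma> p' \<noteq> \<sigma> q'" using xx yy inj by (auto dest: inj_onD)
      then have "{\<sigma> p, \<sigma> q} = {\<sigma> p', \<sigma> q'}" using e xx yy unfolding g_def
        by (auto simp: min_def max_def split: if_splits)
      then have "(\<sigma> p = \<sigma> p' \<and> \<sigma> q = \<sigma> q') \<or> (\<sigma> p = \<sigma> q' \<and> \<sigma> q = \<sigma> p')"
        by (simp add: doubleton_eq_iff)
      then have "(p = p' \<and> q = q') \<or> (p = q' \<and> q = p')"
        using inj xx(2,3) yy(2,3) by (auto dest: inj_onD)
      then show "x = y" using xx yy by auto
    qed
    show "g ` QQ P = QQ I"
    proof
      show "g ` QQ P \<subseteq> QQ I"
      proof
        fix z assume "z \<in> g ` QQ P"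
        then obtain p q where "z = g (p,q)" "p \<in> P" "q \<in> P" "p < q" by (auto simp: QQ_def)
        moreover have "\<sigma> p \<noteq> \<sigma> q" using calculation inj by (auto dest: inj_onD)
        ultimately show "z \<in> QQ I" using im by (auto simp: g_def QQ_def min_def max_def)
      qed
      show "QQ I \<subseteq> g ` QQ P"
      proof
        fix z assume "z \<in> QQ I"
        then obtain u v where z: "z = (u,v)" "u \<in> I" "v \<in> I" "u < v" by (auto simp: QQ_def)
        obtain p where p: "p \<in> P" "\<sigma> p = u" using z im by auto
        obtain q where q: "q \<in> P" "\<sigma> q = v" using z im by auto
        have "p \<noteq> q" using p q z by auto
        show "z \<in> g ` QQ P"
        proof (cases "p < q")
          case True
          then show ?thesis using p q z by (intro image_eqI[of _ _ "(p,q)"]) (auto simp: g_def QQ_def)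
        next
          case False
          then show ?thesis using p q z \<open>p \<noteq> q\<close> by (intro image_eqI[of _ _ "(q,p)"]) (auto simp: g_def QQ_def)
        qed
      qed
    qed
  qed
  have 2: "(\<Prod>pq\<in>QQ P. h (\<sigma> (fst pq)) (\<sigma> (snd pq))) = (\<Prod>uv\<in>QQ I. h (fst uv) (snd uv))"
  proof -
    have "(\<Prod>pq\<in>QQ P. h (\<sigma> (fst pq)) (\<sigma> (snd pq))) = (\<Prod>pq\<in>QQ P. (\<lambda>uv. h (fst uv) (snd uv)) (g pq))"
    proof (rule prod.cong)
      fix pq assume "pq \<in> QQ P"
      then obtain p q where "pq = (p,q)" "p \<in> P" "q \<in> P" "p < q" by (auto simp: QQ_def)
      moreover have "\<sigma> p \<noteq> \<sigma> q" using calculation inj by (auto dest: inj_onD)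
      moreover have "\<sigma> p \<in> I" "\<sigma> q \<in> I" using calculation im by auto
      ultimately show "h (\<sigma> (fst pq)) (\<sigma> (snd pq)) = (\<lambda>uv. h (fst uv) (snd uv)) (g pq)"
        using hsym by (auto simp: g_def min_def max_def)
    qed simp
    also have "\<dots> = (\<Prod>uv\<in>QQ I. h (fst uv) (snd uv))" by (rule prod.reindex_bij_betw[OF gb])
    finally show ?thesis .
  qed
  have 3: "(\<Prod>uv\<in>QQ I. h (fst uv) (snd uv)) = bij_sign I \<tau>"
    unfolding bij_sign_prod[OF fI] h_def by (rule prod.cong) (auto simp: QQ_def sgp_def)
  have "bij_sign P (\<tau> \<circ> \<sigma>) = (\<Prod>pq\<in>QQ P. sgp (\<sigma> (fst pq)) (\<sigma> (snd pq))) * (\<Prod>pq\<in>QQ P. h (\<sigma> (fst pq)) (\<sigma> (snd pq)))"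
    unfolding 1 by (rule prod.distrib)
  also have "\<dots> = bij_sign P \<sigma> * bij_sign I \<tau>"
    unfolding 2 3 bij_sign_prod[OF fP] ..
  finally show ?thesis .
qed

lemma bij_sign_transpose_lt:
  assumes f: "finite S" and a: "a \<in> S" and b: "b \<in> S" and ab: "a < b"
  shows "bij_sign S (Transposition.transpose a b) = -1"
proof -
  let ?t = "Transposition.transpose a b"
  define M' where "M' = {c\<in>S. a < c \<and> c < b}"
  have X: "{(p, q). p \<in> S \<and> q \<in> S \<and> p < q \<and> ?t q < ?t p} = insert (a,b) (Pair a ` M' \<union> (\<lambda>c. (c,b)) ` M')"
    using a b ab by (auto simp: transpose_def M'_def split: if_splits)
  have fM: "finite M'" using f by (simp add: M'_def)
  have "card (insert (a,b) (Pair a ` M' \<union> (\<lambda>c. (c,b)) ` M')) = Suc (card (Pair a ` M' \<union> (\<lambda>c. (c,b)) ` M'))"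
    using fM by (subst card_insert_disjoint) (auto simp: M'_def)
  also have "card (Pair a ` M' \<union> (\<lambda>c. (c,b)) ` M') = card (Pair a ` M') + card ((\<lambda>c. (c,b)) ` M')"
    using fM ab by (subst card_Un_disjoint) (auto simp: M'_def)
  also have "card (Pair a ` M') = card M'" by (rule card_image) (auto simp: inj_on_def)
  also have "card ((\<lambda>c. (c,b)) ` M') = card M'" by (rule card_image) (auto simp: inj_on_def)
  finally have "card {(p, q). p \<in> S \<and> q \<in> S \<and> p < q \<and> ?t q < ?t p} = Suc (2 * card M')" using X by simp
  then show ?thesis by (simp add: bij_sign_def)
qed

lemma bij_sign_transpose:
  assumes f: "finite S" and a: "a \<in> S" and b: "b \<in> S" and ab: "a \<noteq> b"
  shows "bij_sign S (Transposition.transpose a b) = -1"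
proof (cases "a < b")
  case True then show ?thesis using bij_sign_transpose_lt[OF f a b] by simp
next
  case False then have "b < a" using ab by simp
  then show ?thesis using bij_sign_transpose_lt[OF f b a] by (simp add: transpose_commute)
qed

lemma sign_bij_sign:
  assumes f: "finite S" and p: "p permutes S"
  shows "of_int (sign p) = bij_sign S p"
  using p f
proof (induction rule: permutes_induct)
  case id
  have "{(p, q). p \<in> S \<and> q \<in> S \<and> p < q \<and> q < p} = {}" by auto
  then have "card {(p, q). p \<in> S \<and> q \<in> S \<and> p < q \<and> q < p} = 0" by (metis card.empty)
  then show ?case by (simp add: bij_sign_def sign_id)
next
  case (swap a b p)
  have pp: "permutation p" using swap f permutation_permutes by blast
  have pt: "permutation (Transposition.transpose a b)" by (simp add: permutation_swap_id)
  have "bij_sign S (Transposition.transpose a b \<circ> p) = bij_sign S p * bij_sign S (Transposition.transpose a b)"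
    by (rule bij_sign_mult[OF f f permutes_imp_bij[OF \<open>p permutes S\<close>]]) (rule inj_on_subset[OF inj_transpose], simp)
  also have "\<dots> = - bij_sign S p" using bij_sign_transpose[OF f \<open>a \<in> S\<close> \<open>b \<in> S\<close> \<open>a \<noteq> b\<close>] by simp
  finally have e1: "bij_sign S (Transposition.transpose a b \<circ> p) = - bij_sign S p" .
  have "sign (Transposition.transpose a b \<circ> p) = sign (Transposition.transpose a b) * sign p"
    by (rule sign_compose[OF pt pp])
  then have "sign (Transposition.transpose a b \<circ> p) = - sign p" using \<open>a \<noteq> b\<close> by (simp add: sign_swap_id)
  then have "of_int (sign (Transposition.transpose a b \<circ> p)) = - (of_int (sign p) :: complex)" by simp
  then show ?case unfolding e1 swap.IH .
qed

lemma perm_restrict_bij: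
  assumes f: "finite S"
  shows "bij_betw (\<lambda>p. restrict p S) {p. p permutes S} {g \<in> PiE S (\<lambda>_. S). inj_on g S}"
proof -
  have h1: "\<forall>p\<in>{p. p permutes S}. (\<lambda>k. if k \<in> S then restrict p S k else k) = p"
    by (auto simp: fun_eq_iff permutes_not_in)
  have h2: "\<forall>g\<in>{g \<in> PiE S (\<lambda>_. S). inj_on g S}. restrict (\<lambda>k. if k \<in> S then g k else k) S = g"
    by (auto simp: fun_eq_iff PiE_def extensional_def restrict_def)
  have h3: "(\<lambda>p. restrict p S) ` {p. p permutes S} \<subseteq> {g \<in> PiE S (\<lambda>_. S). inj_on g S}"
  proof
    fix g assume "g \<in> (\<lambda>p. restrict p S) ` {p. p permutes S}"
    then obtain p where p: "p permutes S" and gp: "g = restrict p S" by auto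
    have "inj_on p S" using permutes_inj_on[OF p] .
    then show "g \<in> {g \<in> PiE S (\<lambda>_. S). inj_on g S}" using p gp
      by (auto simp: permutes_in_image inj_on_def)
  qed
  have h4: "(\<lambda>g k. if k \<in> S then g k else k) ` {g \<in> PiE S (\<lambda>_. S). inj_on g S} \<subseteq> {p. p permutes S}"
  proof safe
    fix g assume g: "g \<in> PiE S (\<lambda>_. S)" and i: "inj_on g S"
    let ?h = "\<lambda>k. if k \<in> S then g k else k"
    have "g ` S \<subseteq> S" using g by auto
    then have gs: "g ` S = S" using endo_inj_surj[OF f _ i] by simp
    have "bij_betw ?h S S" unfolding bij_betw_def
    proof
      show "inj_on ?h S" using i by (auto simp: inj_on_def)
      show "?h ` S = S" using gs by auto
    qed
    then show "?h permutes S" by (rule bij_imp_permutes) auto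
  qed
  show ?thesis by (rule bij_betw_byWitness[OF h1 h2 h3 h4])
qed

lemma change_basis:
  fixes a b c :: "nat \<Rightarrow> nat \<Rightarrow> complex"
  assumes f: "finite S" and ab: "\<forall>i\<in>S. \<forall>j. a i j = (\<Sum>l\<in>S. c i l * b l j)"
  shows "\<exists>d. \<forall>x. (\<Sum>\<pi>\<in>{\<pi>. \<pi> permutes S}. of_int (sign \<pi>) * (\<Prod>k\<in>S. a (\<pi> k) (x k)))
             = d * (\<Sum>\<pi>\<in>{\<pi>. \<pi> permutes S}. of_int (sign \<pi>) * (\<Prod>k\<in>S. b (\<pi> k) (x k)))"
proof -
  define d where "d = (\<Sum>\<rho>\<in>{\<rho>. \<rho> permutes S}. of_int (sign \<rho>) * (\<Prod>i\<in>S. c (\<rho> i) i))"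
  define T where "T g = (\<Sum>\<pi>\<in>{\<pi>. \<pi> permutes S}. of_int (sign \<pi>) * (\<Prod>k\<in>S. c (\<pi> k) (g k)))" for g
  have Tperm: "T p = of_int (sign p) * d" if p: "p permutes S" for p
  proof -
    have pp: "permutation p" using p f permutation_permutes by blast
    have "T p = (\<Sum>\<pi>\<in>{\<pi>. \<pi> permutes S}. of_int (sign (\<pi> \<circ> p)) * (\<Prod>k\<in>S. c ((\<pi> \<circ> p) k) (p k)))"
      unfolding T_def by (rule sum_permutations_compose_right[OF p])
    also have "\<dots> = (\<Sum>\<pi>\<in>{\<pi>. \<pi> permutes S}. of_int (sign p) * (of_int (sign \<pi>) * (\<Prod>i\<in>S. c (\<pi> i) i)))"
    proof (rule sum.cong[OF refl])
      fix \<pi> assume "\<pi> \<in> {\<pi>. \<pi> permutes S}"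
      then have q: "\<pi> permutes S" by simp
      have "sign (\<pi> \<circ> p) = sign \<pi> * sign p"
        using q f permutation_permutes pp by (blast intro: sign_compose)
      moreover have "(\<Prod>i\<in>S. c (\<pi> i) i) = (\<Prod>k\<in>S. c ((\<pi> \<circ> p) k) (p k))"
        using prod.permute[OF p, of "\<lambda>i. c (\<pi> i) i"] by (simp add: o_def)
      ultimately show "of_int (sign (\<pi> \<circ> p)) * (\<Prod>k\<in>S. c ((\<pi> \<circ> p) k) (p k))
          = of_int (sign p) * (of_int (sign \<pi>) * (\<Prod>i\<in>S. c (\<pi> i) i))" by simp
    qed
    also have "\<dots> = of_int (sign p) * d" unfolding d_def by (simp add: sum_distrib_left)
    finally show ?thesis .
  qed
  have T0: "T g = 0" if g: "g \<in> PiE S (\<lambda>_. S)" and ni: "\<not> inj_on g S" for g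
  proof -
    obtain i j where ij: "i \<in> S" "j \<in> S" "i \<noteq> j" "g i = g j" using ni unfolding inj_on_def by blast
    let ?t = "Transposition.transpose i j"
    have t: "?t permutes S" using ij by (simp add: permutes_swap_id)
    have gt: "g (?t k) = g k" for k using ij by (auto simp: transpose_def)
    have "T g = (\<Sum>\<pi>\<in>{\<pi>. \<pi> permutes S}. of_int (sign (\<pi> \<circ> ?t)) * (\<Prod>k\<in>S. c ((\<pi> \<circ> ?t) k) (g k)))"
      unfolding T_def by (rule sum_permutations_compose_right[OF t])
    also have "\<dots> = (\<Sum>\<pi>\<in>{\<pi>. \<pi> permutes S}. - (of_int (sign \<pi>) * (\<Prod>k\<in>S. c (\<pi> k) (g k))))"
    proof (rule sum.cong[OF refl])
      fix \<pi> assume "\<pi> \<in> {\<pi>. \<pi> permutes S}"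
      then have q: "\<pi> permutes S" by simp
      have "sign (\<pi> \<circ> ?t) = sign \<pi> * sign ?t"
        using q t f permutation_permutes by (blast intro: sign_compose)
      then have s: "sign (\<pi> \<circ> ?t) = - sign \<pi>" using ij by (simp add: sign_swap_id)
      have "(\<Prod>k\<in>S. c (\<pi> k) (g k)) = (\<Prod>k\<in>S. c (\<pi> (?t k)) (g (?t k)))"
        using prod.permute[OF t, of "\<lambda>k. c (\<pi> k) (g k)"] by (simp add: o_def)
      also have "\<dots> = (\<Prod>k\<in>S. c ((\<pi> \<circ> ?t) k) (g k))" by (simp add: gt)
      finally show "of_int (sign (\<pi> \<circ> ?t)) * (\<Prod>k\<in>S. c ((\<pi> \<circ> ?t) k) (g k))
          = - (of_int (sign \<pi>) * (\<Prod>k\<in>S. c (\<pi> k) (g k)))" using s by simp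
    qed
    also have "\<dots> = - T g" unfolding T_def by (simp add: sum_negf)
    finally show ?thesis by simp
  qed
  have "(\<Sum>\<pi>\<in>{\<pi>. \<pi> permutes S}. of_int (sign \<pi>) * (\<Prod>k\<in>S. a (\<pi> k) (x k)))
        = d * (\<Sum>\<pi>\<in>{\<pi>. \<pi> permutes S}. of_int (sign \<pi>) * (\<Prod>k\<in>S. b (\<pi> k) (x k)))" for x
  proof -
    let ?P = "{\<pi>. \<pi> permutes S}"
    let ?F = "PiE S (\<lambda>_. S)"
    define B where "B g = (\<Prod>k\<in>S. b (g k) (x k))" for g
    have fP: "finite ?P" using f by (simp add: finite_permutations)
    have fF: "finite ?F" using f by (simp add: finite_PiE)
    have "(\<Sum>\<pi>\<in>?P. of_int (sign \<pi>) * (\<Prod>k\<in>S. a (\<pi> k) (x k)))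
        = (\<Sum>\<pi>\<in>?P. of_int (sign \<pi>) * (\<Sum>g\<in>?F. \<Prod>k\<in>S. c (\<pi> k) (g k) * b (g k) (x k)))"
    proof (rule sum.cong[OF refl])
      fix \<pi> assume "\<pi> \<in> ?P"
      then have q: "\<pi> permutes S" by simp
      have "(\<Prod>k\<in>S. a (\<pi> k) (x k)) = (\<Prod>k\<in>S. \<Sum>l\<in>S. c (\<pi> k) l * b l (x k))"
        using ab permutes_in_image[OF q] by (intro prod.cong) auto
      also have "\<dots> = (\<Sum>g\<in>?F. \<Prod>k\<in>S. c (\<pi> k) (g k) * b (g k) (x k))"
        by (rule prod_sum_PiE) (use f in auto)
      finally show "of_int (sign \<pi>) * (\<Prod>k\<in>S. a (\<pi> k) (x k))
          = of_int (sign \<pi>) * (\<Sum>g\<in>?F. \<Prod>k\<in>S. c (\<pi> k) (g k) * b (g k) (x k))" by simp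
    qed
    also have "\<dots> = (\<Sum>g\<in>?F. T g * B g)"
      unfolding T_def B_def prod.distrib sum_distrib_left sum_distrib_right
      by (subst sum.swap) (simp add: mult.assoc)
    also have "\<dots> = (\<Sum>g\<in>{g \<in> ?F. inj_on g S}. T g * B g)"
      by (rule sum.mono_neutral_right[OF fF]) (auto simp: T0)
    also have "\<dots> = (\<Sum>p\<in>?P. T (restrict p S) * B (restrict p S))"
      by (rule sum.reindex_bij_betw[OF perm_restrict_bij[OF f], symmetric])
    also have "\<dots> = (\<Sum>p\<in>?P. d * (of_int (sign p) * B p))"
    proof (rule sum.cong[OF refl])
      fix p assume "p \<in> ?P"
      then have p: "p permutes S" by simp
      have "T (restrict p S) = T p" unfolding T_def by (intro sum.cong refl arg_cong2[where f="(*)"] prod.cong) auto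
      moreover have "B (restrict p S) = B p" unfolding B_def by (intro prod.cong) auto
      ultimately show "T (restrict p S) * B (restrict p S) = d * (of_int (sign p) * B p)"
        using Tperm[OF p] by simp
    qed
    also have "\<dots> = d * (\<Sum>\<pi>\<in>?P. of_int (sign \<pi>) * (\<Prod>k\<in>S. b (\<pi> k) (x k)))"
      by (simp add: sum_distrib_left B_def)
    finally show ?thesis .
  qed
  then show ?thesis by blast
qed

definition ortho :: "nat \<Rightarrow> (nat \<Rightarrow> nat \<Rightarrow> complex) \<Rightarrow> bool" where
  "ortho N b \<longleftrightarrow> (\<forall>i\<in>{1..N}. \<forall>k\<in>{1..N}. cinner N (b i) (b k) = (if i = k then 1 else 0))"

lemma unitary_cinner:
  assumes U: "is_unitary N U"
  shows "cinner N (mat_app N U v) (mat_app N U w) = cinner N v w"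
proof -
  have "cinner N (mat_app N U v) (mat_app N U w)
      = (\<Sum>j<N. (\<Sum>a<N. cnj (U j a) * cnj (v a)) * (\<Sum>b<N. U j b * w b))"
    by (simp add: cinner_def mat_app_def)
  also have "\<dots> = (\<Sum>j<N. \<Sum>a<N. \<Sum>b<N. cnj (v a) * w b * (cnj (U j a) * U j b))"
    by (simp only: sum_product) (simp add: mult_ac)
  also have "\<dots> = (\<Sum>a<N. \<Sum>j<N. \<Sum>b<N. cnj (v a) * w b * (cnj (U j a) * U j b))"
    by (rule sum.swap)
  also have "\<dots> = (\<Sum>a<N. \<Sum>b<N. \<Sum>j<N. cnj (v a) * w b * (cnj (U j a) * U j b))"
    by (rule sum.cong[OF refl], rule sum.swap)
  also have "\<dots> = (\<Sum>a<N. \<Sum>b<N. cnj (v a) * w b * (if a = b then 1 else 0))"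
    using U unfolding is_unitary_def by (simp add: sum_distrib_left[symmetric])
  also have "\<dots> = cinner N v w"
    unfolding cinner_def
  proof (rule sum.cong[OF refl])
    fix a assume a: "a \<in> {..<N}"
    have "(\<Sum>b<N. cnj (v a) * w b * (if a = b then 1 else 0)) = (\<Sum>b<N. if a = b then cnj (v a) * w b else 0)"
      by (rule sum.cong) auto
    also have "\<dots> = cnj (v a) * w a" using a by (simp add: sum.delta)
    finally show "(\<Sum>b<N. cnj (v a) * w b * (if a = b then 1 else 0)) = cnj (v a) * w a" .
  qed
  finally show ?thesis .
qed

lemma ortho_alpha:
  fixes m M :: nat
  assumes "onb N (\<alpha> 0)"
    and "\<forall>m\<in>{1..M}. is_unitary N (U m)"
    and "\<forall>m\<in>{1..M}. \<forall>i\<in>{1..N}. \<alpha> m i = mat_app N (U m) (\<alpha> (m - 1) i)"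
  shows "m \<le> M \<Longrightarrow> ortho N (\<alpha> m)"
proof (induction m)
  case 0
  then show ?case using assms(1) by (simp add: onb_def ortho_def)
next
  case (Suc m)
  then have IH: "ortho N (\<alpha> m)" by simp
  have u: "is_unitary N (U (Suc m))" using assms(2) Suc.prems by auto
  have e: "\<alpha> (Suc m) i = mat_app N (U (Suc m)) (\<alpha> m i)" if "i \<in> {1..N}" for i
    using assms(3)[rule_format, of "Suc m" i] Suc.prems that by simp
  show ?case using IH unfolding ortho_def by (simp add: e unitary_cinner[OF u])
qed

lemma alpha_fixed:
  fixes j k M :: nat
  assumes "\<forall>m\<in>{1..M}. \<forall>i\<in>{1..N}. \<alpha> m i = mat_app N (U m) (\<alpha> (m - 1) i)"
    and "\<forall>m\<in>{2..M}.
           (\<forall>k\<in>{1..<m}. mat_app N (U m) (\<alpha> (m - 1) (n k)) = \<alpha> (m - 1) (n k))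
         \<and> (\<forall>i\<in>{1..N} - n ` {1..<m}. \<exists>c. mat_app N (U m) (\<alpha> (m - 1) i)
                = (\<lambda>j. \<Sum>l\<in>{1..N} - n ` {1..<m}. c l * \<alpha> (m - 1) l j))"
    and "\<forall>m\<in>{1..M}. n m \<in> {1..N}"
    and k: "1 \<le> k"
  shows "k \<le> j \<Longrightarrow> j \<le> M \<Longrightarrow> \<alpha> j (n k) = \<alpha> k (n k)"
proof (induction j)
  case 0
  then show ?case using k by simp
next
  case (Suc j)
  show ?case
  proof (cases "k = Suc j")
    case True
    then show ?thesis by simp
  next
    case False
    then have kj: "k \<le> j" using Suc.prems by simp
    then have IH: "\<alpha> j (n k) = \<alpha> k (n k)" using Suc by simp
    have nk: "n k \<in> {1..N}" using assms(3) k kj Suc.prems by auto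
    have sj: "Suc j \<in> {1..M}" using Suc.prems by simp
    have e1: "\<alpha> (Suc j) (n k) = mat_app N (U (Suc j)) (\<alpha> j (n k))"
      using assms(1)[rule_format, OF sj nk] by simp
    have sj2: "Suc j \<in> {2..M}" using Suc.prems kj k by simp
    have kk: "k \<in> {1..<Suc j}" using kj k by simp
    have e2: "mat_app N (U (Suc j)) (\<alpha> j (n k)) = \<alpha> j (n k)"
      using conjunct1[OF assms(2)[rule_format, OF sj2], rule_format, OF kk] by simp
    show ?thesis using e1 e2 IH by simp
  qed
qed

lemma meas_seq_scale:
  "meas_seq N a n m (\<lambda>x. c * \<Psi> x) = (\<lambda>x. c * meas_seq N a n m \<Psi> x)"
  by (induction m) (simp_all add: qproj_def sum_distrib_left mult_ac)

definition CC :: "nat set \<Rightarrow> (nat \<Rightarrow> nat) \<Rightarrow> nat \<Rightarrow> (nat \<Rightarrow> nat) set" where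
  "CC S n m = {\<pi>. \<pi> permutes S \<and> (\<forall>k\<in>{1..m}. \<pi> k = n k)}"

definition GG :: "nat set \<Rightarrow> (nat \<Rightarrow> nat \<Rightarrow> complex) \<Rightarrow> (nat \<Rightarrow> nat) set \<Rightarrow> (nat \<Rightarrow> nat) \<Rightarrow> complex" where
  "GG S b C x = (\<Sum>\<pi>\<in>C. of_int (sign \<pi>) * (\<Prod>k\<in>S. b (\<pi> k) (x k)))"

lemma meas_G:
  assumes S: "S = {1..N}" and o: "ortho N b"
    and ab: "\<forall>k\<in>{1..M}. a k (n k) = b (n k) \<and> n k \<in> S" and MN: "M < N"
  shows "m \<le> M \<Longrightarrow> meas_seq N a n m (GG S b (CC S n 0)) = GG S b (CC S n m)"
proof (induction m)
  case 0
  then show ?case by simp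
next
  case (Suc m)
  let ?v = "n (Suc m)"
  have sm: "Suc m \<in> S" using Suc.prems MN S by auto
  have vS: "?v \<in> S" and av: "a (Suc m) ?v = b ?v" using ab Suc.prems by auto
  have fS: "finite S" using S by simp
  have fC: "finite (CC S n m)" using fS
    by (rule finite_subset[OF _ finite_permutations[of S], rotated]) (auto simp: CC_def)
  show ?case
  proof
    fix x
    have "meas_seq N a n (Suc m) (GG S b (CC S n 0)) x
        = b ?v (x (Suc m)) * (\<Sum>j<N. cnj (b ?v j) * GG S b (CC S n m) (x(Suc m := j)))"
      using Suc by (simp add: qproj_def av)
    also have "\<dots> = (\<Sum>\<pi>\<in>CC S n m. (if \<pi> (Suc m) = ?v then of_int (sign \<pi>) * (\<Prod>k\<in>S. b (\<pi> k) (x k)) else 0))"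
    proof -
      have "GG S b (CC S n m) (x(Suc m := j)) = (\<Sum>\<pi>\<in>CC S n m. of_int (sign \<pi>) * (b (\<pi> (Suc m)) j * (\<Prod>k\<in>S - {Suc m}. b (\<pi> k) (x k))))" for j
        unfolding GG_def
      proof (rule sum.cong[OF refl])
        fix \<pi>
        have "(\<Prod>k\<in>S. b (\<pi> k) ((x(Suc m := j)) k)) = b (\<pi> (Suc m)) j * (\<Prod>k\<in>S - {Suc m}. b (\<pi> k) ((x(Suc m := j)) k))"
          using prod.remove[OF fS sm, of "\<lambda>k. b (\<pi> k) ((x(Suc m := j)) k)"] by simp
        also have "(\<Prod>k\<in>S - {Suc m}. b (\<pi> k) ((x(Suc m := j)) k)) = (\<Prod>k\<in>S - {Suc m}. b (\<pi> k) (x k))"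
          by (rule prod.cong) auto
        finally show "of_int (sign \<pi>) * (\<Prod>k\<in>S. b (\<pi> k) ((x(Suc m := j)) k)) = of_int (sign \<pi>) * (b (\<pi> (Suc m)) j * (\<Prod>k\<in>S - {Suc m}. b (\<pi> k) (x k)))"
          by simp
      qed
      then have "(\<Sum>j<N. cnj (b ?v j) * GG S b (CC S n m) (x(Suc m := j)))
          = (\<Sum>j<N. \<Sum>\<pi>\<in>CC S n m. of_int (sign \<pi>) * (\<Prod>k\<in>S - {Suc m}. b (\<pi> k) (x k)) * (cnj (b ?v j) * b (\<pi> (Suc m)) j))"
        by (simp add: sum_distrib_left mult_ac)
      also have "\<dots> = (\<Sum>\<pi>\<in>CC S n m. of_int (sign \<pi>) * (\<Prod>k\<in>S - {Suc m}. b (\<pi> k) (x k)) * cinner N (b ?v) (b (\<pi> (Suc m))))"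
        by (subst sum.swap) (simp add: cinner_def sum_distrib_left)
      also have "\<dots> = (\<Sum>\<pi>\<in>CC S n m. of_int (sign \<pi>) * (\<Prod>k\<in>S - {Suc m}. b (\<pi> k) (x k)) * (if \<pi> (Suc m) = ?v then 1 else 0))"
      proof (rule sum.cong[OF refl])
        fix \<pi> assume "\<pi> \<in> CC S n m"
        then have "\<pi> (Suc m) \<in> S" using sm by (auto simp: CC_def permutes_in_image)
        then show "of_int (sign \<pi>) * (\<Prod>k\<in>S - {Suc m}. b (\<pi> k) (x k)) * cinner N (b ?v) (b (\<pi> (Suc m)))
            = of_int (sign \<pi>) * (\<Prod>k\<in>S - {Suc m}. b (\<pi> k) (x k)) * (if \<pi> (Suc m) = ?v then 1 else 0)"
          using o vS S unfolding ortho_def by auto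
      qed
      finally have eq: "(\<Sum>j<N. cnj (b ?v j) * GG S b (CC S n m) (x(Suc m := j)))
          = (\<Sum>\<pi>\<in>CC S n m. of_int (sign \<pi>) * (\<Prod>k\<in>S - {Suc m}. b (\<pi> k) (x k)) * (if \<pi> (Suc m) = ?v then 1 else 0))" .
      show ?thesis unfolding eq sum_distrib_left
      proof (rule sum.cong[OF refl])
        fix \<pi>
        show "b ?v (x (Suc m)) * (of_int (sign \<pi>) * (\<Prod>k\<in>S - {Suc m}. b (\<pi> k) (x k)) * (if \<pi> (Suc m) = ?v then 1 else 0))
          = (if \<pi> (Suc m) = ?v then of_int (sign \<pi>) * (\<Prod>k\<in>S. b (\<pi> k) (x k)) else 0)"
          using prod.remove[OF fS sm, of "\<lambda>k. b (\<pi> k) (x k)"] by auto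
      qed
    qed
    also have "\<dots> = (\<Sum>\<pi>\<in>{\<pi>\<in>CC S n m. \<pi> (Suc m) = ?v}. of_int (sign \<pi>) * (\<Prod>k\<in>S. b (\<pi> k) (x k)))"
      by (rule sum.inter_filter[OF fC, symmetric])
    also have "{\<pi>\<in>CC S n m. \<pi> (Suc m) = ?v} = CC S n (Suc m)"
      by (auto simp: CC_def le_Suc_eq)
    also have "(\<Sum>\<pi>\<in>CC S n (Suc m). of_int (sign \<pi>) * (\<Prod>k\<in>S. b (\<pi> k) (x k))) = GG S b (CC S n (Suc m)) x"
      by (simp only: GG_def)
    finally show "meas_seq N a n (Suc m) (GG S b (CC S n 0)) x = GG S b (CC S n (Suc m)) x" .
  qed
qed

lemma norm_G:
  assumes S: "S = {1..N}" and o: "ortho N b" and C: "C \<subseteq> {\<pi>. \<pi> permutes S}"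
  shows "(\<Sum>x\<in>cfgs N. (cmod (GG S b C x))\<^sup>2) = real (card C)"
proof -
  have fS: "finite S" using S by simp
  have fC: "finite C" using C finite_permutations[OF fS] finite_subset by blast
  define h where "h \<pi> \<pi>' k j = b (\<pi> k) j * cnj (b (\<pi>' k) j)" for \<pi> \<pi>' :: "nat \<Rightarrow> nat" and k j
  define s where "s \<pi> = (of_int (sign \<pi>) :: complex)" for \<pi> :: "nat \<Rightarrow> nat"
  have cfg: "cfgs N = PiE S (\<lambda>_. {..<N})" using S by (simp add: cfgs_def)
  have 1: "GG S b C x * cnj (GG S b C x) = (\<Sum>\<pi>\<in>C. \<Sum>\<pi>'\<in>C. s \<pi> * s \<pi>' * (\<Prod>k\<in>S. h \<pi> \<pi>' k (x k)))" for x
  proof -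
    have "GG S b C x * cnj (GG S b C x) = (\<Sum>\<pi>\<in>C. s \<pi> * (\<Prod>k\<in>S. b (\<pi> k) (x k))) * (\<Sum>\<pi>'\<in>C. s \<pi>' * (\<Prod>k\<in>S. cnj (b (\<pi>' k) (x k))))"
      by (simp add: GG_def s_def)
    also have "\<dots> = (\<Sum>\<pi>\<in>C. \<Sum>\<pi>'\<in>C. (s \<pi> * (\<Prod>k\<in>S. b (\<pi> k) (x k))) * (s \<pi>' * (\<Prod>k\<in>S. cnj (b (\<pi>' k) (x k)))))"
      by (rule sum_product)
    also have "\<dots> = (\<Sum>\<pi>\<in>C. \<Sum>\<pi>'\<in>C. s \<pi> * s \<pi>' * (\<Prod>k\<in>S. h \<pi> \<pi>' k (x k)))"
      by (intro sum.cong refl) (simp add: h_def prod.distrib mult_ac)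
    finally show ?thesis .
  qed
  have 2: "(\<Sum>x\<in>cfgs N. \<Prod>k\<in>S. h \<pi> \<pi>' k (x k)) = (if \<pi> = \<pi>' then 1 else 0)"
    if p: "\<pi> \<in> C" "\<pi>' \<in> C" for \<pi> \<pi>'
  proof -
    have pp: "\<pi> permutes S" "\<pi>' permutes S" using p C by auto
    have "(\<Sum>x\<in>cfgs N. \<Prod>k\<in>S. h \<pi> \<pi>' k (x k)) = (\<Prod>k\<in>S. \<Sum>j<N. h \<pi> \<pi>' k j)"
      unfolding cfg by (rule prod_sum_PiE[symmetric]) (use fS in auto)
    also have "\<dots> = (\<Prod>k\<in>S. if \<pi> k = \<pi>' k then 1 else 0)"
    proof (rule prod.cong[OF refl])
      fix k assume k: "k \<in> S"
      have "\<pi> k \<in> S" "\<pi>' k \<in> S" using k pp by (auto simp: permutes_in_image)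
      then have "\<pi> k \<in> {1..N}" "\<pi>' k \<in> {1..N}" using S by auto
      then have "cinner N (b (\<pi>' k)) (b (\<pi> k)) = (if \<pi>' k = \<pi> k then 1 else 0)"
        using o unfolding ortho_def by blast
      then show "(\<Sum>j<N. h \<pi> \<pi>' k j) = (if \<pi> k = \<pi>' k then 1 else 0)"
        by (auto simp: cinner_def h_def mult.commute)
    qed
    also have "\<dots> = (if \<pi> = \<pi>' then 1 else 0)"
    proof (cases "\<pi> = \<pi>'")
      case True
      then show ?thesis by simp
    next
      case False
      have "\<exists>k\<in>S. \<pi> k \<noteq> \<pi>' k"
      proof (rule ccontr)
        assume "\<not> (\<exists>k\<in>S. \<pi> k \<noteq> \<pi>' k)"
        then have "\<pi> = \<pi>'" using pp by (metis permutes_not_in ext)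
        then show False using False by simp
      qed
      then have "(\<Prod>k\<in>S. (if \<pi> k = \<pi>' k then 1 else 0) :: complex) = 0"
        using fS by (auto intro: prod_zero)
      then show ?thesis using False by simp
    qed
    finally show ?thesis .
  qed
  have "complex_of_real (\<Sum>x\<in>cfgs N. (cmod (GG S b C x))\<^sup>2) = (\<Sum>x\<in>cfgs N. GG S b C x * cnj (GG S b C x))"
    unfolding of_real_sum by (intro sum.cong refl) (rule complex_norm_square)
  also have "\<dots> = (\<Sum>x\<in>cfgs N. \<Sum>\<pi>\<in>C. \<Sum>\<pi>'\<in>C. s \<pi> * s \<pi>' * (\<Prod>k\<in>S. h \<pi> \<pi>' k (x k)))"
    using 1 by simp
  also have "\<dots> = (\<Sum>\<pi>\<in>C. \<Sum>x\<in>cfgs N. \<Sum>\<pi>'\<in>C. s \<pi> * s \<pi>' * (\<Prod>k\<in>S. h \<pi> \<pi>' k (x k)))"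
    by (rule sum.swap)
  also have "\<dots> = (\<Sum>\<pi>\<in>C. \<Sum>\<pi>'\<in>C. \<Sum>x\<in>cfgs N. s \<pi> * s \<pi>' * (\<Prod>k\<in>S. h \<pi> \<pi>' k (x k)))"
    by (rule sum.cong[OF refl], rule sum.swap)
  also have "\<dots> = (\<Sum>\<pi>\<in>C. \<Sum>\<pi>'\<in>C. s \<pi> * s \<pi>' * (if \<pi> = \<pi>' then 1 else 0))"
    by (intro sum.cong refl) (simp add: sum_distrib_left[symmetric] 2)
  also have "\<dots> = (\<Sum>\<pi>\<in>C. s \<pi> * s \<pi>)"
  proof (rule sum.cong[OF refl])
    fix \<pi> assume p: "\<pi> \<in> C"
    have "(\<Sum>\<pi>'\<in>C. s \<pi> * s \<pi>' * (if \<pi> = \<pi>' then 1 else 0)) = (\<Sum>\<pi>'\<in>C. if \<pi> = \<pi>' then s \<pi> * s \<pi>' else 0)"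
      by (rule sum.cong) auto
    also have "\<dots> = s \<pi> * s \<pi>" using p fC by (simp add: sum.delta)
    finally show "(\<Sum>\<pi>'\<in>C. s \<pi> * s \<pi>' * (if \<pi> = \<pi>' then 1 else 0)) = s \<pi> * s \<pi>" .
  qed
  also have "\<dots> = of_nat (card C)"
  proof -
    have "s \<pi> * s \<pi> = 1" for \<pi>
      unfolding s_def of_int_mult[symmetric] by simp
    then show ?thesis by simp
  qed
  finally have "complex_of_real (\<Sum>x\<in>cfgs N. (cmod (GG S b C x))\<^sup>2) = complex_of_real (real (card C))" by simp
  then show ?thesis using of_real_eq_iff by blast
qed

lemma permutes_shrink:
  assumes p: "p permutes S" and I: "I \<subseteq> S" and fix1: "\<forall>x\<in>S - I. p x = x"
  shows "p permutes I"
  using p fix1 unfolding permutes_def by blast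

lemma card_CC:
  assumes S: "S = {1..N}" and nS: "n ` {1..M} \<subseteq> S" and p0: "\<pi>0 \<in> CC S n M"
  shows "card (CC S n M) = fact (card (S - n ` {1..M}))"
proof -
  let ?I = "S - n ` {1..M}"
  have p0S: "\<pi>0 permutes S" and p0n: "\<forall>k\<in>{1..M}. \<pi>0 k = n k" using p0 by (auto simp: CC_def)
  have IS: "?I \<subseteq> S" by auto
  have b: "bij_betw (\<lambda>\<pi>. \<pi> \<circ> inv \<pi>0) (CC S n M) {\<rho>. \<rho> permutes ?I}"
  proof (rule bij_betw_byWitness[where f' = "\<lambda>\<rho>. \<rho> \<circ> \<pi>0"])
    show "\<forall>a\<in>CC S n M. a \<circ> inv \<pi>0 \<circ> \<pi>0 = a"
      by (simp add: comp_assoc permutes_inv_o[OF p0S])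
    show "\<forall>a'\<in>{\<rho>. \<rho> permutes ?I}. a' \<circ> \<pi>0 \<circ> inv \<pi>0 = a'"
      by (simp add: comp_assoc permutes_inv_o[OF p0S])
    show "(\<lambda>\<pi>. \<pi> \<circ> inv \<pi>0) ` CC S n M \<subseteq> {\<rho>. \<rho> permutes ?I}"
    proof
      fix r assume "r \<in> (\<lambda>\<pi>. \<pi> \<circ> inv \<pi>0) ` CC S n M"
      then obtain \<pi> where pi: "\<pi> \<in> CC S n M" and r: "r = \<pi> \<circ> inv \<pi>0" by auto
      have piS: "\<pi> permutes S" and pin: "\<forall>k\<in>{1..M}. \<pi> k = n k" using pi by (auto simp: CC_def)
      have "r permutes S" unfolding r by (rule permutes_compose[OF permutes_inv[OF p0S] piS])
      moreover have "\<forall>x\<in>S - ?I. r x = x"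
      proof
        fix x assume "x \<in> S - ?I"
        then obtain k where k: "k \<in> {1..M}" "x = n k" by auto
        have "inv \<pi>0 x = k" using k p0n permutes_inverses(2)[OF p0S, of k] by simp
        then show "r x = x" using k pin r by simp
      qed
      ultimately show "r \<in> {\<rho>. \<rho> permutes ?I}" using permutes_shrink[OF _ IS] by blast
    qed
    show "(\<lambda>\<rho>. \<rho> \<circ> \<pi>0) ` {\<rho>. \<rho> permutes ?I} \<subseteq> CC S n M"
    proof
      fix r assume "r \<in> (\<lambda>\<rho>. \<rho> \<circ> \<pi>0) ` {\<rho>. \<rho> permutes ?I}"
      then obtain \<rho> where rho: "\<rho> permutes ?I" and r: "r = \<rho> \<circ> \<pi>0" by auto
      have "r permutes S" unfolding r by (rule permutes_compose[OF p0S permutes_subset[OF rho IS]])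
      moreover have "\<forall>k\<in>{1..M}. r k = n k"
      proof
        fix k assume k: "k \<in> {1..M}"
        have "n k \<notin> ?I" using k by auto
        then have "\<rho> (n k) = n k" using permutes_not_in[OF rho] by blast
        then show "r k = n k" using k p0n r by simp
      qed
      ultimately show "r \<in> CC S n M" by (simp add: CC_def)
    qed
  qed
  have "card (CC S n M) = card {\<rho>. \<rho> permutes ?I}" using bij_betw_same_card[OF b] .
  also have "\<dots> = fact (card ?I)" by (rule card_permutations) (use S in auto)
  finally show ?thesis .
qed

lemma cmod_prod_sgp: "cmod (\<Prod>x\<in>A. sgp (f x) (g x)) = 1"
  unfolding prod_norm[symmetric] by (rule prod.neutral) (simp add: sgp_def)

lemma GG_restrict:
  assumes S: "S = {1..N}" and MN: "M \<le> N" and inj: "inj_on n {1..M}" and nS: "n ` {1..M} \<subseteq> S"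
    and P: "P = {M+1..N}" and I: "I = S - n ` {1..M}"
  shows "\<exists>\<epsilon>. cmod \<epsilon> = 1 \<and> (\<forall>x. GG S b (CC S n M) x = \<epsilon> * ((\<Prod>m\<in>{1..M}. b (n m) (x m)) *
     (\<Sum>\<sigma>\<in>{\<sigma>. \<sigma> \<in> P \<rightarrow>\<^sub>E I \<and> bij_betw \<sigma> P I}. bij_sign P \<sigma> * (\<Prod>k\<in>P. b (\<sigma> k) (x k)))))"
proof -
  define \<epsilon> where "\<epsilon> = (\<Prod>pq\<in>QQ {1..M}. sgp (n (fst pq)) (n (snd pq))) * (\<Prod>p\<in>{1..M}. \<Prod>i\<in>I. sgp (n p) i)"
  have cs: "cmod (sgp u v) = 1" for u v by (simp add: sgp_def)
  have e1: "cmod \<epsilon> = 1" unfolding \<epsilon>_def norm_mult cmod_prod_sgp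
    by (simp add: prod_norm[symmetric] cs)
  have fS: "finite S" using S by simp
  have SP: "S = {1..M} \<union> P" and dj: "{1..M} \<inter> P = {}" using S P MN by auto
  have fP: "finite P" using P by simp
  have bijP: "bij_betw \<pi> P I" if pi: "\<pi> \<in> CC S n M" for \<pi>
  proof -
    have piS: "\<pi> permutes S" and pin: "\<forall>k\<in>{1..M}. \<pi> k = n k" using pi by (auto simp: CC_def)
    have injS: "inj_on \<pi> S" using permutes_inj_on[OF piS] .
    have "\<pi> ` P = \<pi> ` (S - {1..M})" using SP dj by (metis Diff_cancel Int_Diff_Un Un_Diff inf_commute sup_bot.right_neutral)
    also have "\<dots> = \<pi> ` S - \<pi> ` {1..M}" by (rule inj_on_image_set_diff[OF injS]) (use SP in auto)
    also have "\<pi> ` {1..M} = n ` {1..M}" using pin by auto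
    also have "\<pi> ` S = S" by (rule permutes_image[OF piS])
    finally have "\<pi> ` P = I" using I by simp
    moreover have "inj_on \<pi> P" using injS by (rule inj_on_subset) (use SP in auto)
    ultimately show ?thesis by (simp add: bij_betw_def)
  qed
  have QS: "QQ S = QQ {1..M} \<union> ({1..M} \<times> P) \<union> QQ P" using S P MN by (auto simp: QQ_def)
  have sgn: "of_int (sign \<pi>) = \<epsilon> * bij_sign P \<pi>" if pi: "\<pi> \<in> CC S n M" for \<pi>
  proof -
    have piS: "\<pi> permutes S" and pin: "\<forall>k\<in>{1..M}. \<pi> k = n k" using pi by (auto simp: CC_def)
    let ?f = "\<lambda>pq. sgp (\<pi> (fst pq)) (\<pi> (snd pq))"
    have "of_int (sign \<pi>) = (\<Prod>pq\<in>QQ S. ?f pq)"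
      using sign_bij_sign[OF fS piS] bij_sign_prod[OF fS] by simp
    also have "\<dots> = (\<Prod>pq\<in>QQ {1..M}. ?f pq) * (\<Prod>pq\<in>{1..M} \<times> P. ?f pq) * (\<Prod>pq\<in>QQ P. ?f pq)"
    proof -
      have d1: "(QQ {1..M} \<union> {1..M} \<times> P) \<inter> QQ P = {}" using P by (auto simp: QQ_def)
      have d2: "QQ {1..M} \<inter> ({1..M} \<times> P) = {}" using P by (auto simp: QQ_def)
      have f1: "finite (QQ {1..M})" "finite ({1..M} \<times> P)" "finite (QQ P)" using fP by (auto simp: finite_QQ)
      show ?thesis unfolding QS prod.union_disjoint[OF finite_UnI[OF f1(1,2)] f1(3) d1] prod.union_disjoint[OF f1(1,2) d2] ..
    qed
    also have "(\<Prod>pq\<in>QQ {1..M}. ?f pq) = (\<Prod>pq\<in>QQ {1..M}. sgp (n (fst pq)) (n (snd pq)))"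
      using pin by (intro prod.cong) (auto simp: QQ_def)
    also have "(\<Prod>pq\<in>{1..M} \<times> P. ?f pq) = (\<Prod>p\<in>{1..M}. \<Prod>q\<in>P. sgp (n p) (\<pi> q))"
    proof -
      have "(\<Prod>p\<in>{1..M}. \<Prod>q\<in>P. sgp (n p) (\<pi> q)) = (\<Prod>p\<in>{1..M}. \<Prod>q\<in>P. sgp (\<pi> p) (\<pi> q))"
        using pin by simp
      also have "\<dots> = (\<Prod>(p,q)\<in>{1..M} \<times> P. sgp (\<pi> p) (\<pi> q))"
        by (rule prod.cartesian_product)
      also have "\<dots> = (\<Prod>pq\<in>{1..M} \<times> P. ?f pq)"
        by (rule prod.cong) auto
      finally show ?thesis by simp
    qed
    also have "\<dots> = (\<Prod>p\<in>{1..M}. \<Prod>i\<in>I. sgp (n p) i)"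
      by (intro prod.cong refl prod.reindex_bij_betw[OF bijP[OF pi]])
    also have "(\<Prod>pq\<in>QQ P. ?f pq) = bij_sign P \<pi>" using bij_sign_prod[OF fP] by simp
    finally show ?thesis unfolding \<epsilon>_def by (simp add: mult_ac)
  qed
  have main: "GG S b (CC S n M) x = \<epsilon> * ((\<Prod>m\<in>{1..M}. b (n m) (x m)) *
     (\<Sum>\<sigma>\<in>{\<sigma>. \<sigma> \<in> P \<rightarrow>\<^sub>E I \<and> bij_betw \<sigma> P I}. bij_sign P \<sigma> * (\<Prod>k\<in>P. b (\<sigma> k) (x k))))" for x
  proof -
    let ?B = "{\<sigma>. \<sigma> \<in> P \<rightarrow>\<^sub>E I \<and> bij_betw \<sigma> P I}"
    have "GG S b (CC S n M) x = (\<Sum>\<pi>\<in>CC S n M. \<epsilon> * ((\<Prod>m\<in>{1..M}. b (n m) (x m)) * (bij_sign P \<pi> * (\<Prod>k\<in>P. b (\<pi> k) (x k)))))"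
      unfolding GG_def
    proof (rule sum.cong[OF refl])
      fix \<pi> assume pi: "\<pi> \<in> CC S n M"
      have pin: "\<forall>k\<in>{1..M}. \<pi> k = n k" using pi by (auto simp: CC_def)
      have "(\<Prod>k\<in>S. b (\<pi> k) (x k)) = (\<Prod>k\<in>{1..M}. b (\<pi> k) (x k)) * (\<Prod>k\<in>P. b (\<pi> k) (x k))"
        unfolding SP by (rule prod.union_disjoint) (use dj fP in auto)
      also have "(\<Prod>k\<in>{1..M}. b (\<pi> k) (x k)) = (\<Prod>m\<in>{1..M}. b (n m) (x m))"
        using pin by simp
      finally show "of_int (sign \<pi>) * (\<Prod>k\<in>S. b (\<pi> k) (x k)) = \<epsilon> * ((\<Prod>m\<in>{1..M}. b (n m) (x m)) * (bij_sign P \<pi> * (\<Prod>k\<in>P. b (\<pi> k) (x k))))"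
        using sgn[OF pi] by (simp add: mult_ac)
    qed
    also have "\<dots> = \<epsilon> * ((\<Prod>m\<in>{1..M}. b (n m) (x m)) * (\<Sum>\<pi>\<in>CC S n M. bij_sign P \<pi> * (\<Prod>k\<in>P. b (\<pi> k) (x k))))"
      by (simp add: sum_distrib_left)
    also have "(\<Sum>\<pi>\<in>CC S n M. bij_sign P \<pi> * (\<Prod>k\<in>P. b (\<pi> k) (x k))) = (\<Sum>\<sigma>\<in>?B. bij_sign P \<sigma> * (\<Prod>k\<in>P. b (\<sigma> k) (x k)))"
    proof (rule sum.reindex_bij_witness[where j = "\<lambda>\<pi>. restrict \<pi> P" and i = "\<lambda>\<sigma> k. if k \<in> {1..M} then n k else if k \<in> P then \<sigma> k else k"])
      fix \<pi> assume pi: "\<pi> \<in> CC S n M"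
      have piS: "\<pi> permutes S" and pin: "\<forall>k\<in>{1..M}. \<pi> k = n k" using pi by (auto simp: CC_def)
      show "(\<lambda>k. if k \<in> {1..M} then n k else if k \<in> P then restrict \<pi> P k else k) = \<pi>"
      proof
        fix k
        show "(if k \<in> {1..M} then n k else if k \<in> P then restrict \<pi> P k else k) = \<pi> k"
          using pin permutes_not_in[OF piS, of k] SP by auto
      qed
      show "restrict \<pi> P \<in> ?B"
        using bijP[OF pi] by (auto simp: bij_betw_def inj_on_def)
      have "bij_sign P (restrict \<pi> P) = bij_sign P \<pi>"
        unfolding bij_sign_def by (rule arg_cong[where f = "\<lambda>c. (-1) ^ card c"]) auto
      then show "bij_sign P (restrict \<pi> P) * (\<Prod>k\<in>P. b (restrict \<pi> P k) (x k)) = bij_sign P \<pi> * (\<Prod>k\<in>P. b (\<pi> k) (x k))"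
        by simp
    next
      fix \<sigma> assume sB: "\<sigma> \<in> ?B"
      let ?g = "\<lambda>k. if k \<in> {1..M} then n k else if k \<in> P then \<sigma> k else k"
      show "restrict ?g P = \<sigma>"
      proof
        fix k show "restrict ?g P k = \<sigma> k" using sB dj by (auto simp: PiE_def extensional_def)
      qed
      have bs: "bij_betw \<sigma> P I" using sB by simp
      have bn: "bij_betw n {1..M} (n ` {1..M})" using inj by (rule inj_on_imp_bij_betw)
      have c1: "?g a = n a" if "a \<in> {1..M}" for a using that by simp
      have b1: "bij_betw ?g {1..M} (n ` {1..M})"
        by (rule iffD2[OF bij_betw_cong[OF c1] bn])
      have c2: "?g a = \<sigma> a" if "a \<in> P" for a using that dj by auto
      have b2: "bij_betw ?g P I"
        by (rule iffD2[OF bij_betw_cong[OF c2] bs])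
      have d: "n ` {1..M} \<inter> I = {}" unfolding I by blast
      have "bij_betw ?g ({1..M} \<union> P) (n ` {1..M} \<union> I)"
        by (rule bij_betw_combine[OF b1 b2 d])
      moreover have "n ` {1..M} \<union> I = S" using nS unfolding I by blast
      ultimately have bS: "bij_betw ?g S S" unfolding SP[symmetric] by simp
      have "?g x = x" if "x \<notin> S" for x using that unfolding SP by auto
      then have "?g permutes S" using bij_imp_permutes[OF bS] by blast
      then show "?g \<in> CC S n M" by (simp add: CC_def)
    qed
    finally show ?thesis .
  qed
  show ?thesis using e1 main by blast
qed

theorem corollary1:
  fixes N M :: nat and \<alpha> U :: "nat \<Rightarrow> nat \<Rightarrow> nat \<Rightarrow> complex" and n :: "nat \<Rightarrow> nat"
  assumes "M < N"
    and "onb N (\<alpha> 0)"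
    and "\<forall>m\<in>{1..M}. is_unitary N (U m)"
    and "\<forall>m\<in>{1..M}. \<forall>i\<in>{1..N}. \<alpha> m i = mat_app N (U m) (\<alpha> (m - 1) i)"
    and "\<forall>m\<in>{2..M}.
           (\<forall>k\<in>{1..<m}. mat_app N (U m) (\<alpha> (m - 1) (n k)) = \<alpha> (m - 1) (n k))
         \<and> (\<forall>i\<in>{1..N} - n ` {1..<m}. \<exists>c. mat_app N (U m) (\<alpha> (m - 1) i)
                = (\<lambda>j. \<Sum>l\<in>{1..N} - n ` {1..<m}. c l * \<alpha> (m - 1) l j))"
    and "\<forall>m\<in>{1..M}. n m \<in> {1..N}"
    and "\<exists>x\<in>cfgs N. meas_seq N \<alpha> n M (singlet N (\<alpha> 0)) x \<noteq> 0"
  shows "\<exists>\<theta>::real. \<forall>x\<in>cfgs N.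
           meas_seq N \<alpha> n M (singlet N (\<alpha> 0)) x
             / complex_of_real (snorm N (meas_seq N \<alpha> n M (singlet N (\<alpha> 0))))
           = exp (\<i> * complex_of_real \<theta>) *
             ((\<Prod>m\<in>{1..M}. \<alpha> m (n m) (x m))
              * sub_singlet {M+1..N} ({1..N} - n ` {1..M}) (\<alpha> M) x)"
proof -
  define S where "S = {1..N}"
  define \<beta> where "\<beta> = \<alpha> M"
  define P where "P = {M+1..N}"
  define I where "I = S - n ` {1..M}"
  define \<Phi> where "\<Phi> = meas_seq N \<alpha> n M (singlet N (\<alpha> 0))"
  have fS: "finite S" by (simp add: S_def)
  have ob: "ortho N \<beta>" unfolding \<beta>_def by (rule ortho_alpha[OF assms(2,3,4)]) simp
  have fix1: "\<alpha> k (n k) = \<beta> (n k)" if "k \<in> {1..M}" for k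
    unfolding \<beta>_def using alpha_fixed[OF assms(4,5,6), where k=k and j=M] that by simp
  have ab: "\<forall>k\<in>{1..M}. \<alpha> k (n k) = \<beta> (n k) \<and> n k \<in> S"
    using fix1 assms(6) by (simp add: S_def)
  have nS: "n ` {1..M} \<subseteq> S" using assms(6) by (auto simp: S_def)
  have C0: "CC S n 0 = {\<pi>. \<pi> permutes S}" by (simp add: CC_def)
  have vec: "is_vec N (\<beta> i)" if "i \<in> S" for i
  proof (cases "M = 0")
    case True
    then show ?thesis using assms(2) that by (simp add: \<beta>_def onb_def S_def)
  next
    case False
    then have "\<beta> i = mat_app N (U M) (\<alpha> (M - 1) i)" using assms(4) that by (simp add: \<beta>_def S_def)
    then show ?thesis by (simp add: is_vec_def mat_app_def)
  qed
  have "\<forall>i\<in>S. \<exists>c. \<beta> i = (\<lambda>j. \<Sum>l\<in>S. c l * \<alpha> 0 l j)"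
    using assms(2) vec unfolding onb_def S_def by blast
  then obtain c where c: "\<forall>i\<in>S. \<beta> i = (\<lambda>j. \<Sum>l\<in>S. c i l * \<alpha> 0 l j)"
    by (rule bchoice[THEN exE]) blast
  have "\<forall>i\<in>S. \<forall>j. \<beta> i j = (\<Sum>l\<in>S. c i l * \<alpha> 0 l j)" using c by metis
  from change_basis[OF fS this] obtain d where
    d: "\<forall>x. GG S \<beta> (CC S n 0) x = d * GG S (\<alpha> 0) (CC S n 0) x"
    unfolding GG_def C0 by blast
  have cardC0: "card (CC S n 0) = fact N" unfolding C0 by (rule card_permutations) (simp_all add: S_def)
  have "d \<noteq> 0"
  proof
    assume "d = 0"
    then have "\<forall>x. GG S \<beta> (CC S n 0) x = 0" using d by simp
    then have "(\<Sum>x\<in>cfgs N. (cmod (GG S \<beta> (CC S n 0) x))\<^sup>2) = 0" by simp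
    moreover have "(\<Sum>x\<in>cfgs N. (cmod (GG S \<beta> (CC S n 0) x))\<^sup>2) = real (card (CC S n 0))"
      by (rule norm_G[OF S_def ob]) (simp add: C0)
    ultimately show False using cardC0 by simp
  qed
  define c0 where "c0 = complex_of_real (1 / sqrt (fact N))"
  have c0nz: "c0 \<noteq> 0" by (simp add: c0_def)
  have sing: "singlet N (\<alpha> 0) = (\<lambda>x. c0 * GG S (\<alpha> 0) (CC S n 0) x)"
    unfolding C0 by (simp add: singlet_def c0_def GG_def S_def)
  define \<kappa> where "\<kappa> = c0 / d"
  have knz: "\<kappa> \<noteq> 0" using c0nz \<open>d \<noteq> 0\<close> by (simp add: \<kappa>_def)
  have sb: "singlet N (\<alpha> 0) = (\<lambda>x. \<kappa> * GG S \<beta> (CC S n 0) x)"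
    unfolding sing \<kappa>_def using d \<open>d \<noteq> 0\<close> by (simp add: fun_eq_iff)
  have Phi: "\<Phi> = (\<lambda>x. \<kappa> * GG S \<beta> (CC S n M) x)"
  proof -
    have "\<Phi> = meas_seq N \<alpha> n M (\<lambda>x. \<kappa> * GG S \<beta> (CC S n 0) x)" unfolding \<Phi>_def sb ..
    also have "\<dots> = (\<lambda>x. \<kappa> * meas_seq N \<alpha> n M (GG S \<beta> (CC S n 0)) x)" by (rule meas_seq_scale)
    also have "meas_seq N \<alpha> n M (GG S \<beta> (CC S n 0)) = GG S \<beta> (CC S n M)"
      by (rule meas_G[where S=S and N=N and b=\<beta> and M=M and a=\<alpha> and n=n and m=M, OF S_def ob ab assms(1) order_refl])
    finally show ?thesis .
  qed
  obtain x0 where "\<Phi> x0 \<noteq> 0" using assms(7) unfolding \<Phi>_def by blast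
  then have "\<kappa> * GG S \<beta> (CC S n M) x0 \<noteq> 0" unfolding Phi .
  then have "GG S \<beta> (CC S n M) x0 \<noteq> 0" by simp
  then have "CC S n M \<noteq> {}" by (auto simp: GG_def)
  then obtain \<pi>0 where p0: "\<pi>0 \<in> CC S n M" by blast
  have inj: "inj_on n {1..M}"
  proof (rule inj_onI)
    fix a b assume "a \<in> {1..M}" "b \<in> {1..M}" "n a = n b"
    moreover have "\<forall>k\<in>{1..M}. \<pi>0 k = n k" and pp: "\<pi>0 permutes S" using p0 by (auto simp: CC_def)
    ultimately have "\<pi>0 a = \<pi>0 b" by simp
    then show "a = b" using injD[OF permutes_inj[OF pp]] by blast
  qed
  have cardI: "card I = N - M"
  proof -
    have "card I = card S - card (n ` {1..M})" unfolding I_def by (rule card_Diff_subset[OF _ nS]) simp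
    also have "card (n ` {1..M}) = M" using card_image[OF inj] by simp
    finally show ?thesis by (simp add: S_def)
  qed
  have cardC: "card (CC S n M) = fact (N - M)"
    using card_CC[OF S_def nS p0] cardI by (simp add: I_def)
  obtain \<epsilon> where e1: "cmod \<epsilon> = 1" and eG: "\<forall>x. GG S \<beta> (CC S n M) x = \<epsilon> * ((\<Prod>m\<in>{1..M}. \<beta> (n m) (x m)) *
     (\<Sum>\<sigma>\<in>{\<sigma>. \<sigma> \<in> P \<rightarrow>\<^sub>E I \<and> bij_betw \<sigma> P I}. bij_sign P \<sigma> * (\<Prod>k\<in>P. \<beta> (\<sigma> k) (x k))))"
    using GG_restrict[OF S_def _ inj nS P_def I_def, of \<beta>] assms(1) by auto
  define F where "F = sqrt (fact (N - M) :: real)"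
  have Fpos: "F > 0" by (simp add: F_def)
  define R where "R x = (\<Prod>m\<in>{1..M}. \<alpha> m (n m) (x m)) * sub_singlet {M+1..N} ({1..N} - n ` {1..M}) (\<alpha> M) x" for x
  have GR: "GG S \<beta> (CC S n M) x = \<epsilon> * complex_of_real F * R x" for x
  proof -
    have "(\<Prod>m\<in>{1..M}. \<alpha> m (n m) (x m)) = (\<Prod>m\<in>{1..M}. \<beta> (n m) (x m))"
      using fix1 by simp
    then have "R x = (\<Prod>m\<in>{1..M}. \<beta> (n m) (x m)) * (complex_of_real (1 / F) *
       (\<Sum>\<sigma>\<in>{\<sigma>. \<sigma> \<in> P \<rightarrow>\<^sub>E I \<and> bij_betw \<sigma> P I}. bij_sign P \<sigma> * (\<Prod>k\<in>P. \<beta> (\<sigma> k) (x k))))"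
      unfolding R_def sub_singlet_def cardI[unfolded I_def S_def] F_def
      by (simp add: P_def I_def S_def \<beta>_def)
    then show ?thesis using eG Fpos by (simp add: field_simps)
  qed
  have snorm: "snorm N \<Phi> = cmod \<kappa> * F"
  proof -
    have "(\<Sum>x\<in>cfgs N. (cmod (\<Phi> x))\<^sup>2) = (cmod \<kappa>)\<^sup>2 * (\<Sum>x\<in>cfgs N. (cmod (GG S \<beta> (CC S n M) x))\<^sup>2)"
      by (simp add: Phi norm_mult power_mult_distrib sum_distrib_left)
    also have "(\<Sum>x\<in>cfgs N. (cmod (GG S \<beta> (CC S n M) x))\<^sup>2) = real (card (CC S n M))"
      by (rule norm_G[OF S_def ob]) (auto simp: CC_def)
    finally have "(\<Sum>x\<in>cfgs N. (cmod (\<Phi> x))\<^sup>2) = (cmod \<kappa> * F)\<^sup>2"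
      using cardC by (simp add: F_def power_mult_distrib)
    then show ?thesis unfolding snorm_def using Fpos by simp
  qed
  define z where "z = \<kappa> * \<epsilon> / complex_of_real (cmod \<kappa>)"
  have cz: "cmod z = 1" using knz e1 by (simp add: z_def norm_mult norm_divide)
  then have znz: "z \<noteq> 0" by auto
  have ez: "exp (\<i> * complex_of_real (Arg z)) = z"
    using cis_Arg[OF znz] cz by (simp add: cis_conv_exp sgn_eq)
  show ?thesis
  proof (intro exI ballI)
    fix x assume "x \<in> cfgs N"
    have p1: "\<Phi> x = \<kappa> * (\<epsilon> * complex_of_real F * R x)" unfolding Phi GR by (rule refl)
    have p2: "complex_of_real (snorm N \<Phi>) = complex_of_real (cmod \<kappa>) * complex_of_real F"
      unfolding snorm by simp
    have Fnz: "complex_of_real F \<noteq> 0" using Fpos by simp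
    have "\<Phi> x / complex_of_real (snorm N \<Phi>) = \<kappa> * (\<epsilon> * complex_of_real F * R x) / (complex_of_real (cmod \<kappa>) * complex_of_real F)"
      unfolding p1 p2 by (rule refl)
    also have "\<dots> = \<kappa> * \<epsilon> / complex_of_real (cmod \<kappa>) * R x" using Fnz by (simp add: field_simps)
    also have "\<dots> = z * R x" unfolding z_def by (rule refl)
    finally show "meas_seq N \<alpha> n M (singlet N (\<alpha> 0)) x / complex_of_real (snorm N (meas_seq N \<alpha> n M (singlet N (\<alpha> 0))))
        = exp (\<i> * complex_of_real (Arg z)) * ((\<Prod>m\<in>{1..M}. \<alpha> m (n m) (x m)) * sub_singlet {M+1..N} ({1..N} - n ` {1..M}) (\<alpha> M) x)"
      unfolding ez R_def[symmetric] \<Phi>_def[symmetric] .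
  qed
qed

end
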